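(* Let $\mathcal{H}$ be a finite $k$-uniform hypergraph such that: (i) $\mathcal{H}$ has a vertex $z$ of degree $2$; (ii) $\delta(\mathcal{H} \setminus \{z\}) \geq 3$ and $d_{\mathcal H}(u) \geq 4$ for every $u \in V(\mathcal{H}) \setminus \{z\}$; (iv) for every two edges $e, e' \in E(\mathcal{H})$, every monomorphism $\phi : V(\mathcal{H} \setminus \{e, e'\}) \to V(\mathcal{H})$ is the identity. Then for every edge $e \in E(\mathcal{H})$, every monomorphism $\phi : V(\mathcal{H} \setminus \{e\}) \to V(\mathcal{H})$ is the identity.
   Context: $d_{\mathcal H}(x)$ is the number of edges containing $x$; $\delta$ is minimum degree. $\mathcal{H}\setminus\{z\}$ for a vertex $z$ is obtained by deleting $z$ and all edges containing it. For a set $S$ of edges, $\mathcal{H}\setminus S$ is the hypergraph with edge set $E(\mathcal H)\setminus S$, and $V(\mathcal{H}\setminus S)$ denotes the union of its edges. A monomorphism $\phi: V(\mathcal{F}')\to V(\mathcal{F})$ (for $\mathcal F'\subseteq \mathcal F$) is an injective map such that $\{\phi(a): a\in x\}$ is an edge of $\mathcal F$ for every edge $x$ of $\mathcal F'$; "identity" means $\phi(a)=a$ for all $a$ in the domain. *)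

theory Defs
  imports Main
begin

definition uniform_hypergraph :: "'a set \<Rightarrow> 'a set set \<Rightarrow> nat \<Rightarrow> bool" where
  "uniform_hypergraph V E k \<longleftrightarrow> finite V \<and> (\<forall>e\<in>E. e \<subseteq> V \<and> card e = k)"

definition hdeg :: "'a set set \<Rightarrow> 'a \<Rightarrow> nat" where
  "hdeg E x = card {e\<in>E. x \<in> e}"

text \<open>Edges of H minus z (delete z and all edges containing it); its vertex set is V - {z}.\<close>
definition del_vertex_edges :: "'a set set \<Rightarrow> 'a \<Rightarrow> 'a set set" where
  "del_vertex_edges E z = {e\<in>E. z \<notin> e}"

definition min_deg_ge :: "'a set \<Rightarrow> 'a set set \<Rightarrow> nat \<Rightarrow> bool" where
  "min_deg_ge V E d \<longleftrightarrow> (\<forall>u\<in>V. hdeg E u \<ge> d)"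

text \<open>Monomorphism from the subhypergraph with edge set F' (vertex set the union of
  its edges) into the hypergraph with edge set F.\<close>
definition monomorphism :: "'a set set \<Rightarrow> 'a set set \<Rightarrow> ('a \<Rightarrow> 'a) \<Rightarrow> bool" where
  "monomorphism F' F \<phi> \<longleftrightarrow> inj_on \<phi> (\<Union>F') \<and> (\<forall>x\<in>F'. \<phi> ` x \<in> F)"

definition is_identity_on :: "'a set \<Rightarrow> ('a \<Rightarrow> 'a) \<Rightarrow> bool" where
  "is_identity_on A \<phi> \<longleftrightarrow> (\<forall>a\<in>A. \<phi> a = a)"

end

theory Submission
  imports Defs
begin

lemma two_elems:
  assumes "card A \<ge> 2"
  shows "\<exists>x\<in>A. \<exists>y\<in>A. x \<noteq> y"
proof -
  have "finite A" using assms card.infinite by fastforce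
  have "A \<noteq> {}" using assms by auto
  then obtain x where x: "x \<in> A" by auto
  have "card (A - {x}) \<ge> 1" using assms x \<open>finite A\<close> by simp
  then obtain y where "y \<in> A - {x}" by (metis One_nat_def card.empty ex_in_conv not_less_eq_eq zero_le)
  thus ?thesis using x by blast
qed

lemma mono_sub:
  assumes "monomorphism F' F \<phi>" "F'' \<subseteq> F'"
  shows "monomorphism F'' F \<phi>"
  using assms unfolding monomorphism_def by (meson Sup_subset_mono inj_on_subset subsetD)

theorem lemma3p2:
  fixes V :: "'a set" and E :: "'a set set" and k :: nat and z :: 'a
  assumes "uniform_hypergraph V E k"
    and "z \<in> V" and "hdeg E z = 2"
    and "min_deg_ge (V - {z}) (del_vertex_edges E z) 3"
    and "\<forall>u\<in>V - {z}. hdeg E u \<ge> 4"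
    and "\<forall>e\<in>E. \<forall>e'\<in>E. e \<noteq> e' \<longrightarrow>
           (\<forall>\<phi>. monomorphism (E - {e, e'}) E \<phi> \<longrightarrow> is_identity_on (\<Union>(E - {e, e'})) \<phi>)"
  shows "\<forall>e\<in>E. \<forall>\<phi>. monomorphism (E - {e}) E \<phi> \<longrightarrow> is_identity_on (\<Union>(E - {e})) \<phi>"
proof (intro ballI allI impI)
  fix e \<phi> assume e: "e \<in> E" and m: "monomorphism (E - {e}) E \<phi>"
  have finV: "finite V" and sub: "\<And>f. f \<in> E \<Longrightarrow> f \<subseteq> V"
    using assms(1) unfolding uniform_hypergraph_def by auto
  have "E \<subseteq> Pow V" using sub by auto
  hence finE: "finite E" using finV by (simp add: finite_subset)
  have key: "\<exists>e'\<in>E. e' \<noteq> e \<and> a \<in> \<Union>(E - {e, e'})" if a: "a \<in> \<Union>(E - {e})" for a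
  proof -
    have aV: "a \<in> V" using a sub by blast
    define S where "S = {f\<in>E. a \<in> f} - {e}"
    have finS: "finite S" using finE S_def by simp
    show ?thesis
    proof (cases "card S \<ge> 2")
      case True
      then obtain f1 f2 where "f1 \<in> S" "f2 \<in> S" "f1 \<noteq> f2" using two_elems by blast
      thus ?thesis unfolding S_def by blast
    next
      case False
      have "{f\<in>E. a \<in> f} \<subseteq> insert e S" by (auto simp: S_def)
      hence "card {f\<in>E. a \<in> f} \<le> card (insert e S)" by (rule card_mono[rotated]) (simp add: finS)
      also have "\<dots> \<le> card S + 1" by (simp add: card_insert_if finS)
      finally have "hdeg E a \<le> card S + 1" unfolding hdeg_def .
      hence "hdeg E a < 4" using False by linarith
      hence "a = z" using assms(5) aV by (meson DiffI not_le singletonD)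
      have z2: "card {f\<in>E. z \<in> f} = 2" using assms(3) unfolding hdeg_def .
      then obtain e1 e2 where e12: "{f\<in>E. z \<in> f} = {e1, e2}" "e1 \<noteq> e2"
        unfolding card_2_iff by blast
      have "e1 \<in> E" "e2 \<in> E" "z \<in> e1" "z \<in> e2" using e12 by blast+
      have "e1 \<noteq> {z} \<or> e2 \<noteq> {z}" using e12(2) by auto
      then obtain u where u: "u \<noteq> z" "u \<in> e1 \<union> e2" using \<open>z \<in> e1\<close> \<open>z \<in> e2\<close> by blast
      have "u \<in> V" using u sub \<open>e1 \<in> E\<close> \<open>e2 \<in> E\<close> by blast
      hence "hdeg E u \<ge> 4" using assms(5) u(1) by simp
      hence "card {f\<in>E. u \<in> f} \<ge> 4" unfolding hdeg_def .
      moreover have "card {f\<in>E. u \<in> f} \<le> card E" by (rule card_mono[OF finE]) auto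
      ultimately have "card E \<ge> 4" by linarith
      moreover have "card {e, e1, e2} \<le> 3" by (simp add: card_insert_if)
      moreover have "card E - card {e, e1, e2} \<le> card (E - {e, e1, e2})"
        by (rule diff_card_le_card_Diff) simp
      ultimately have "card (E - {e, e1, e2}) \<ge> 1" by linarith
      then obtain g where g: "g \<in> E" "g \<noteq> e" "g \<noteq> e1" "g \<noteq> e2"
        proof -
        have "E - {e, e1, e2} \<noteq> {}" using \<open>card (E - {e, e1, e2}) \<ge> 1\<close> by (metis card.empty not_one_le_zero)
        thus ?thesis by (auto intro: that)
      qed
      have "e \<in> {e1, e2}"
      proof (rule ccontr)
        assume "e \<notin> {e1, e2}"
        hence "S = {e1, e2}" using e12 \<open>a = z\<close> unfolding S_def by auto
        thus False using False e12 by simp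
      qed
      have "a \<in> \<Union>(E - {e, g})"
        using \<open>e \<in> {e1, e2}\<close> g e12 \<open>a = z\<close> \<open>e1 \<in> E\<close> \<open>e2 \<in> E\<close> \<open>z \<in> e1\<close> \<open>z \<in> e2\<close> by blast
      thus ?thesis using g by blast
    qed
  qed
  show "is_identity_on (\<Union>(E - {e})) \<phi>"
    unfolding is_identity_on_def
  proof
    fix a assume "a \<in> \<Union>(E - {e})"
    from key[OF this] obtain e' where e': "e' \<in> E" "e' \<noteq> e" "a \<in> \<Union>(E - {e, e'})" by blast
    have "E - {e, e'} \<subseteq> E - {e}" by blast
    from mono_sub[OF m this] have mm: "monomorphism (E - {e, e'}) E \<phi>" .
    have "e \<noteq> e'" using e'(2) by simp
    hence "is_identity_on (\<Union>(E - {e, e'})) \<phi>" using assms(6) e e'(1) mm by simp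
    thus "\<phi> a = a" using e' unfolding is_identity_on_def by blast
  qed
qed

end
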